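(* Let $E/\mathbb{Q}$ be an elliptic curve. Suppose that for every positive integer $n$ there exist infinitely many $(n+1)$-dimensional $\mathbb{F}_2$-subspaces $V_1,V_2,\ldots$ of $\mathbb{Q}^\times/(\mathbb{Q}^\times)^2$ which are linearly independent (i.e. the sum $V_1+V_2+\cdots$ is direct) such that for every $i$ and every non-zero $v\in V_i$ the quadratic twist $E_v$ has positive rank over $\mathbb{Q}$. Then for every positive integer $n$ and every $\boldsymbol{\sigma}\in G_{\mathbb{Q}}^n$, the group $E(\bar{\mathbb{Q}}(\boldsymbol{\sigma}))$ has infinite rank.
   Context: $G_{\mathbb{Q}}=\operatorname{Gal}(\bar{\mathbb{Q}}/\mathbb{Q})$; for $\boldsymbol{\sigma}=(\sigma_1,\ldots,\sigma_n)\in G_{\mathbb{Q}}^n$, $\bar{\mathbb{Q}}(\boldsymbol{\sigma})$ is the subfield of $\bar{\mathbb{Q}}$ fixed by $\sigma_1,\ldots,\sigma_n$. For $v\in\mathbb{Q}^\times/(\mathbb{Q}^\times)^2$, $E_v$ denotes the quadratic twist of $E$ by (a representative of) $v$. *)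

theory Defs
  imports "HOL-Computational_Algebra.Polynomial" Complex_Main
begin

datatype 'a ecpt = Infty | Pt 'a 'a

definition on_curve :: "'a::field \<Rightarrow> 'a \<Rightarrow> 'a ecpt \<Rightarrow> bool" where
  "on_curve a b P = (case P of Infty \<Rightarrow> True | Pt x y \<Rightarrow> y^2 = x^3 + a*x + b)"

fun ec_add :: "'a::field \<Rightarrow> 'a ecpt \<Rightarrow> 'a ecpt \<Rightarrow> 'a ecpt" where
  "ec_add a Infty Q = Q"
| "ec_add a P Infty = P"
| "ec_add a (Pt x1 y1) (Pt x2 y2) =
     (if x1 = x2 \<and> y1 = - y2 then Infty
      else let l = (if x1 = x2 then (3*x1^2 + a) / (2*y1) else (y2 - y1) / (x2 - x1));
               x3 = l^2 - x1 - x2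
           in Pt x3 (l*(x1 - x3) - y1))"

fun ec_neg :: "'a::field ecpt \<Rightarrow> 'a ecpt" where
  "ec_neg Infty = Infty"
| "ec_neg (Pt x y) = Pt x (- y)"

fun ec_nmult :: "'a::field \<Rightarrow> nat \<Rightarrow> 'a ecpt \<Rightarrow> 'a ecpt" where
  "ec_nmult a 0 P = Infty"
| "ec_nmult a (Suc n) P = ec_add a P (ec_nmult a n P)"

definition ec_zmult :: "'a::field \<Rightarrow> int \<Rightarrow> 'a ecpt \<Rightarrow> 'a ecpt" where
  "ec_zmult a k P = (if k \<ge> 0 then ec_nmult a (nat k) P else ec_neg (ec_nmult a (nat (-k)) P))"

definition elliptic_over_Q :: "complex \<Rightarrow> complex \<Rightarrow> bool" where
  "elliptic_over_Q a b \<longleftrightarrow> a \<in> \<rat> \<and> b \<in> \<rat> \<and> 4*a^3 + 27*b^2 \<noteq> 0"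

definition points_over :: "'a::field \<Rightarrow> 'a \<Rightarrow> 'a set \<Rightarrow> 'a ecpt set" where
  "points_over a b K = {P. on_curve a b P \<and> (case P of Infty \<Rightarrow> True | Pt x y \<Rightarrow> x \<in> K \<and> y \<in> K)}"

definition infinite_rank :: "'a::field \<Rightarrow> 'a \<Rightarrow> 'a set \<Rightarrow> bool" where
  "infinite_rank a b K \<longleftrightarrow>
     (\<forall>m::nat. \<exists>Ps::nat \<Rightarrow> 'a ecpt. (\<forall>i<m. Ps i \<in> points_over a b K) \<and>
        (\<forall>c::nat \<Rightarrow> int. foldr (\<lambda>i R. ec_add a (ec_zmult a (c i) (Ps i)) R) [0..<m] Infty = Infty
            \<longrightarrow> (\<forall>i<m. c i = 0)))"

definition positive_rank :: "'a::field \<Rightarrow> 'a \<Rightarrow> 'a set \<Rightarrow> bool" where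
  "positive_rank a b K \<longleftrightarrow>
     (\<exists>P \<in> points_over a b K. \<forall>k::nat. k > 0 \<longrightarrow> ec_nmult a k P \<noteq> Infty)"

definition twist_a :: "'a::field \<Rightarrow> 'a \<Rightarrow> 'a" where "twist_a a d = a * d^2"
definition twist_b :: "'a::field \<Rightarrow> 'a \<Rightarrow> 'a" where "twist_b b d = b * d^3"

definition is_rat_square :: "rat \<Rightarrow> bool" where
  "is_rat_square q \<longleftrightarrow> (\<exists>r. q = r^2)"

text \<open>Subspaces of Q^x/(Q^x)^2 are represented by their preimages in Q^x:
  subgroups of Q^x containing all nonzero squares.\<close>
definition sq_subspace :: "rat set \<Rightarrow> bool" where
  "sq_subspace V \<longleftrightarrow> 0 \<notin> V \<and> 1 \<in> V \<and> (\<forall>p\<in>V. \<forall>q\<in>V. p*q \<in> V)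
     \<and> (\<forall>r. r \<noteq> 0 \<longrightarrow> r^2 \<in> V)"

definition sq_class :: "rat \<Rightarrow> rat set" where
  "sq_class q = {r. r \<noteq> 0 \<and> is_rat_square (q / r)}"

definition sq_dim_is :: "rat set \<Rightarrow> nat \<Rightarrow> bool" where
  "sq_dim_is V d \<longleftrightarrow> finite (sq_class ` V) \<and> card (sq_class ` V) = 2^d"

text \<open>The sum of the subspaces V i is direct.\<close>
definition sq_independent :: "(nat \<Rightarrow> rat set) \<Rightarrow> bool" where
  "sq_independent V \<longleftrightarrow>
     (\<forall>I q. finite I \<longrightarrow> (\<forall>i\<in>I. q i \<in> V i) \<longrightarrow> is_rat_square (\<Prod>i\<in>I. q i)
        \<longrightarrow> (\<forall>i\<in>I. is_rat_square (q i)))"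

definition Qbar :: "complex set" where "Qbar = {z. algebraic z}"

definition is_GQ :: "(complex \<Rightarrow> complex) \<Rightarrow> bool" where
  "is_GQ \<sigma> \<longleftrightarrow> bij_betw \<sigma> Qbar Qbar \<and>
     (\<forall>x\<in>Qbar. \<forall>y\<in>Qbar. \<sigma> (x + y) = \<sigma> x + \<sigma> y \<and> \<sigma> (x * y) = \<sigma> x * \<sigma> y)"

definition fixed_field :: "nat \<Rightarrow> (nat \<Rightarrow> complex \<Rightarrow> complex) \<Rightarrow> complex set" where
  "fixed_field n \<sigma> = {z \<in> Qbar. \<forall>i<n. \<sigma> i z = z}"

end

theory Submission
  imports Defs
begin


lemma cubic_ident:
  fixes a b x1 x2 y1 l x :: complex
  assumes "x3 = l^2 - x1 - x2"
  shows "x^3 + a*x + b - (l*(x - x1) + y1)^2 - (x - x1)*(x - x2)*(x - x3)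
     = (a - 2*l*(y1 - l*x1) - (x1*x2 + x1*x3 + x2*x3)) * x + (b - (y1 - l*x1)^2 + x1*x2*x3)"
  unfolding assms by (simp add: power2_eq_square power3_eq_cube algebra_simps)

definition "alph a l x1 x2 y1 = a - 2*l*(y1 - l*x1) - (x1*x2 + x1*(l^2-x1-x2) + x2*(l^2-x1-x2))"
definition "bet b l x1 x2 y1 = b - (y1 - l*x1)^2 + x1*x2*(l^2-x1-x2)"

lemma factor3:
  fixes a b x1 x2 y1 l x :: complex
  assumes "alph a l x1 x2 y1 = 0" "bet b l x1 x2 y1 = 0"
  shows "x^3 + a*x + b - (l*(x - x1) + y1)^2 = (x - x1)*(x - x2)*(x - (l^2 - x1 - x2))"
  using cubic_ident[of "l^2-x1-x2" l x1 x2 x a b y1] assms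
  unfolding alph_def bet_def by simp

lemma chord_ab:
  fixes a b x1 x2 y1 y2 :: complex
  assumes c1: "y1^2 = x1^3 + a*x1 + b" and c2: "y2^2 = x2^3 + a*x2 + b"
    and ne: "x1 \<noteq> x2" and l: "l = (y2 - y1)/(x2 - x1)"
  shows "alph a l x1 x2 y1 = 0 \<and> bet b l x1 x2 y1 = 0"
proof -
  define A where "A = alph a l x1 x2 y1"
  define B where "B = bet b l x1 x2 y1"
  have ly: "l*(x2 - x1) + y1 = y2" using ne unfolding l by (simp add: field_simps)
  have g: "\<And>x. x^3 + a*x + b - (l*(x - x1) + y1)^2 - (x - x1)*(x - x2)*(x - (l^2-x1-x2)) = A*x + B"
    unfolding A_def B_def alph_def bet_def by (rule cubic_ident) simp
  have g1: "A*x1 + B = 0" using g[of x1] c1 by simp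
  have g2: "A*x2 + B = 0" using g[of x2] c2 ly by simp
  have "A*(x1 - x2) = (A*x1 + B) - (A*x2 + B)" by (simp add: algebra_simps)
  with g1 g2 have "A*(x1 - x2) = 0" by simp
  with ne have "A = 0" by simp
  with g1 have "B = 0" by simp
  with \<open>A = 0\<close> show ?thesis unfolding A_def B_def by simp
qed

lemma tangent_ab:
  fixes a b x1 y1 :: complex
  assumes c1: "y1^2 = x1^3 + a*x1 + b" and ne: "y1 \<noteq> 0" and l: "l = (3*x1^2 + a)/(2*y1)"
  shows "alph a l x1 x1 y1 = 0 \<and> bet b l x1 x1 y1 = 0"
proof -
  define A where "A = alph a l x1 x1 y1"
  define B where "B = bet b l x1 x1 y1"
  have ly: "2*l*y1 = 3*x1^2 + a" using ne unfolding l by (simp add: field_simps)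
  have "A = a - 2*l*y1 + 3*x1^2" unfolding A_def alph_def
    by (simp add: power2_eq_square algebra_simps)
  with ly have A0: "A = 0" by simp
  have g: "\<And>x. x^3 + a*x + b - (l*(x - x1) + y1)^2 - (x - x1)*(x - x1)*(x - (l^2-x1-x1)) = A*x + B"
    unfolding A_def B_def alph_def bet_def by (rule cubic_ident) simp
  have g1: "A*x1 + B = 0" using g[of x1] c1 by simp
  with A0 have "B = 0" by simp
  with A0 show ?thesis unfolding A_def B_def by simp
qed

lemma third_on:
  fixes a b x1 x2 y1 l :: complex
  assumes "alph a l x1 x2 y1 = 0" "bet b l x1 x2 y1 = 0"
  shows "(l*(x1 - (l^2 - x1 - x2)) - y1)^2 = (l^2 - x1 - x2)^3 + a*(l^2 - x1 - x2) + b"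
proof -
  have "(l^2 - x1 - x2)^3 + a*(l^2 - x1 - x2) + b - (l*((l^2 - x1 - x2) - x1) + y1)^2 = 0"
    using factor3[OF assms, of "l^2 - x1 - x2"] by simp
  thus ?thesis by (simp add: power2_eq_square algebra_simps)
qed

lemma add_on_curve:
  fixes a b :: complex
  assumes "on_curve a b P" "on_curve a b Q"
  shows "on_curve a b (ec_add a P Q)"
proof (cases P)
  case Infty thus ?thesis using assms by simp
next
  case (Pt x1 y1)
  note P1 = Pt
  show ?thesis
  proof (cases Q)
    case Infty thus ?thesis using assms P1 by simp
  next
    case (Pt x2 y2)
    note Pt2 = Pt
    note Pt = P1
    have c1: "y1^2 = x1^3 + a*x1 + b" using assms(1) Pt by (simp add: on_curve_def)
    have c2: "y2^2 = x2^3 + a*x2 + b" using assms(2) Pt2 by (simp add: on_curve_def)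
    show ?thesis
    proof (cases "x1 = x2 \<and> y1 = - y2")
      case True thus ?thesis using Pt Pt2 by (simp add: on_curve_def)
    next
      case F: False
      show ?thesis
      proof (cases "x1 = x2")
        case True
        have "y2^2 = y1^2" using c1 c2 True by simp
        hence "y2 = y1 \<or> y2 = -y1" by (simp add: power2_eq_iff)
        with F True have yy: "y2 = y1" "y1 \<noteq> 0" by auto
        define l where "l = (3*x1^2 + a)/(2*y1)"
        have ab: "alph a l x1 x1 y1 = 0 \<and> bet b l x1 x1 y1 = 0"
          using tangent_ab[OF c1 yy(2) l_def] .
        have "ec_add a P Q = Pt (l^2 - x1 - x1) (l*(x1 - (l^2 - x1 - x1)) - y1)"
          using Pt Pt2 F True unfolding l_def by (simp add: Let_def)
        thus ?thesis using third_on[of a l x1 x1 y1 b] ab by (simp add: on_curve_def)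
      next
        case False
        define l where "l = (y2 - y1)/(x2 - x1)"
        have ab: "alph a l x1 x2 y1 = 0 \<and> bet b l x1 x2 y1 = 0"
          using chord_ab[OF c1 c2 False l_def] .
        have "ec_add a P Q = Pt (l^2 - x1 - x2) (l*(x1 - (l^2 - x1 - x2)) - y1)"
          using Pt Pt2 False unfolding l_def by (simp add: Let_def)
        thus ?thesis using third_on[of a l x1 x2 y1 b] ab by (simp add: on_curve_def)
      qed
    qed
  qed
qed

lemma ec_add_inv_I1:
  fixes a b :: complex
  assumes "on_curve a b P" "on_curve a b X" and disc: "4*a^3 + 27*b^2 \<noteq> 0"
  shows "ec_add a P (ec_neg (ec_add a P X)) = ec_neg X"
proof (cases P)
  case Infty thus ?thesis by simp
next
  case (Pt x1 y1)
  note P1 = Pt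
  show ?thesis
  proof (cases X)
    case Infty thus ?thesis using P1 by simp
  next
    case (Pt x2 y2)
    note Pt2 = Pt
    note Pt = P1
    have c1: "y1^2 = x1^3 + a*x1 + b" using assms(1) Pt by (simp add: on_curve_def)
    have c2: "y2^2 = x2^3 + a*x2 + b" using assms(2) Pt2 by (simp add: on_curve_def)
    show ?thesis
    proof (cases "x1 = x2 \<and> y1 = - y2")
      case True thus ?thesis using Pt Pt2 by simp
    next
      case F: False
      define l where "l = (if x1 = x2 then (3*x1^2 + a)/(2*y1) else (y2 - y1)/(x2 - x1))"
      define x3 where "x3 = l^2 - x1 - x2"
      define y3 where "y3 = l*(x1 - x3) - y1"
      have S: "ec_add a P X = Pt x3 y3"
        using Pt Pt2 F unfolding l_def x3_def y3_def by (simp add: Let_def)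
      have info: "alph a l x1 x2 y1 = 0 \<and> y2 = y1 + l*(x2 - x1) \<and>
          (x1 = x2 \<longrightarrow> (y1 \<noteq> 0 \<and> 2*l*y1 = 3*x1^2 + a))"
      proof (cases "x1 = x2")
        case True
        have "y2^2 = y1^2" using c1 c2 True by simp
        hence "y2 = y1 \<or> y2 = -y1" by (simp add: power2_eq_iff)
        with F True have yy: "y2 = y1" "y1 \<noteq> 0" by auto
        have l': "l = (3*x1^2 + a)/(2*y1)" using True l_def by simp
        have "2*l*y1 = 3*x1^2 + a" using l' yy by (simp add: field_simps)
        thus ?thesis using tangent_ab[OF c1 yy(2) l'] True yy by simp
      next
        case False
        have l': "l = (y2 - y1)/(x2 - x1)" using False l_def by simp
        have "y2 = y1 + l*(x2 - x1)" using l' False by (simp add: field_simps)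
        thus ?thesis using chord_ab[OF c1 c2 False l'] False by simp
      qed
      have alpha: "a - 2*l*(y1 - l*x1) - (x1*x2 + x1*x3 + x2*x3) = 0"
        using info unfolding alph_def x3_def by simp
      show ?thesis
      proof (cases "x1 = x3 \<and> y1 = y3")
        case True
        have y0: "y1 = 0" using True unfolding y3_def by auto
        have nt: "x1 \<noteq> x2" using info y0 by auto
        have ll: "l^2 = 2*x1 + x2" using True unfolding x3_def by simp
        have e: "a - 2*l*(y1 - l*x1) - (x1*x2 + x1*x3 + x2*x3) = a + 2*l^2*x1 - x1^2 - 2*x1*x2"
          using True y0 by (simp add: power2_eq_square algebra_simps)
        have "a + 2*l^2*x1 - x1^2 - 2*x1*x2 = a + 3*x1^2"
          unfolding ll by (simp add: power2_eq_square algebra_simps)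
        with e have "a - 2*l*(y1 - l*x1) - (x1*x2 + x1*x3 + x2*x3) = a + 3*x1^2" by simp
        with alpha have "a + 3*x1^2 = 0" by simp
        hence a3: "a = -3*x1^2" by (simp add: eq_neg_iff_add_eq_0)
        have "b = 2*x1^3" using c1 y0 a3 by (simp add: power2_eq_square power3_eq_cube algebra_simps)
        with a3 have "4*a^3 + 27*b^2 = 0" by (simp add: power2_eq_square power3_eq_cube algebra_simps)
        with disc show ?thesis by simp
      next
        case F2: False
        have ll: "(if x1 = x3 then (3*x1^2 + a)/(2*y1) else (- y3 - y1)/(x3 - x1)) = l"
        proof (cases "x1 = x3")
          case True
          with F2 have "y1 \<noteq> y3" by simp
          hence y1: "y1 \<noteq> 0" using True unfolding y3_def by auto
          have "2*l*y1 = 3*x1^2 + a"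
          proof (cases "x1 = x2")
            case True thus ?thesis using info by simp
          next
            case False
            have ll: "l^2 = 2*x1 + x2" using \<open>x1 = x3\<close> unfolding x3_def by simp
            have e: "a - 2*l*(y1 - l*x1) - (x1*x2 + x1*x3 + x2*x3) = a - 2*l*y1 + 2*l^2*x1 - x1^2 - 2*x1*x2"
              using \<open>x1 = x3\<close> by (simp add: power2_eq_square algebra_simps)
            have "a - 2*l*y1 + 2*l^2*x1 - x1^2 - 2*x1*x2 = a - 2*l*y1 + 3*x1^2"
              unfolding ll by (simp add: power2_eq_square algebra_simps)
            with e have "a - 2*l*(y1 - l*x1) - (x1*x2 + x1*x3 + x2*x3) = a - 2*l*y1 + 3*x1^2" by simp
            with alpha show ?thesis by (simp add: algebra_simps)
          qed
          thus ?thesis using True y1 by (simp add: field_simps)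
        next
          case False
          thus ?thesis unfolding y3_def by (simp add: field_simps)
        qed
        have "ec_add a P (ec_neg (ec_add a P X)) =
              Pt (l^2 - x1 - x3) (l*(x1 - (l^2 - x1 - x3)) - y1)"
          using S Pt F2 ll by (simp add: Let_def)
        also have "l^2 - x1 - x3 = x2" unfolding x3_def by simp
        also have "l*(x1 - x2) - y1 = - y2" using info by (simp add: algebra_simps)
        finally show ?thesis using Pt2 by simp
      qed
    qed
  qed
qed

lemma nmult_on_curve:
  fixes a b :: complex
  assumes "on_curve a b P" shows "on_curve a b (ec_nmult a k P)"
proof (induction k)
  case 0 thus ?case by (simp add: on_curve_def)
next
  case (Suc k) thus ?case using add_on_curve[OF assms] by simp
qed

lemma no_2torsion:
  fixes a b :: complex
  assumes P: "on_curve a b P" and disc: "4*a^3 + 27*b^2 \<noteq> 0"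
    and kx: "ec_nmult a k P = Pt x 0"
  shows "ec_nmult a (2*k) P = Infty"
proof -
  define X where "X j = ec_nmult a j P" for j
  have I: "ec_add a P (ec_neg (X (Suc j))) = ec_neg (X j)" for j
    unfolding X_def using ec_add_inv_I1[OF P nmult_on_curve[OF P] disc] by simp
  have "\<forall>i. i \<le> k \<longrightarrow> X (k+i) = ec_neg (X (k-i))"
  proof
    fix i show "i \<le> k \<longrightarrow> X (k+i) = ec_neg (X (k-i))"
    proof (induction i)
      case 0 show ?case using kx unfolding X_def by simp
    next
      case (Suc i)
      show ?case
      proof
        assume "Suc i \<le> k"
        hence ih: "X (k+i) = ec_neg (X (k-i))" using Suc by simp
        have ki: "k - i = Suc (k - Suc i)" using \<open>Suc i \<le> k\<close> by simp
        have "X (k + Suc i) = ec_add a P (X (k+i))" unfolding X_def by simp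
        also have "\<dots> = ec_add a P (ec_neg (X (Suc (k - Suc i))))" using ih ki by simp
        also have "\<dots> = ec_neg (X (k - Suc i))" by (rule I)
        finally show "X (k + Suc i) = ec_neg (X (k - Suc i))" .
      qed
    qed
  qed
  hence "X (k+k) = ec_neg (X 0)" by simp
  thus ?thesis unfolding X_def by (simp add: mult_2)
qed

fun scale :: "complex \<Rightarrow> complex ecpt \<Rightarrow> complex ecpt" where
  "scale u Infty = Infty"
| "scale u (Pt x y) = Pt (x/u^2) (y/u^3)"

lemma scale_add:
  fixes a u :: complex
  assumes u: "u \<noteq> 0"
  shows "ec_add a (scale u P) (scale u Q) = scale u (ec_add (a*u^4) P Q)"
proof (cases P)
  case Infty thus ?thesis by simp
next
  case (Pt x1 y1)
  note P1 = Pt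
  show ?thesis
  proof (cases Q)
    case Infty thus ?thesis using P1 by simp
  next
    case (Pt x2 y2)
    have eqx: "(x1/u^2 = x2/u^2) = (x1 = x2)" using u by (simp add: divide_cancel_right)
    have eqy: "(y1/u^3 = - (y2/u^3)) = (y1 = - y2)" using u
      by (metis divide_cancel_right divide_minus_left power_not_zero)
    show ?thesis
    proof (cases "x1 = x2 \<and> y1 = - y2")
      case True thus ?thesis using P1 Pt by simp
    next
      case F: False
      define l where "l = (if x1 = x2 then (3*x1^2 + a*u^4)/(2*y1) else (y2 - y1)/(x2 - x1))"
      define l' where "l' = (if x1/u^2 = x2/u^2 then (3*(x1/u^2)^2 + a)/(2*(y1/u^3))
                            else (y2/u^3 - y1/u^3)/(x2/u^2 - x1/u^2))"
      have ll: "l' = l / u"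
      proof (cases "x1 = x2")
        case True
        have "l' = (3*(x1/u^2)^2 + a)/(2*(y1/u^3))" using True l'_def by simp
        also have "\<dots> = ((3*x1^2 + a*u^4)/(2*y1)) / u" using u
          by (cases "y1 = 0") (simp_all add: field_simps power2_eq_square power3_eq_cube power4_eq_xxxx)
        finally show ?thesis using True l_def by simp
      next
        case False
        have "l' = (y2/u^3 - y1/u^3)/(x2/u^2 - x1/u^2)" using False eqx l'_def by simp
        also have "\<dots> = ((y2 - y1)/(x2 - x1)) / u" using u False
          by (simp add: field_simps power2_eq_square power3_eq_cube)
        finally show ?thesis using False l_def by simp
      qed
      have L: "ec_add a (scale u P) (scale u Q) =
          Pt (l'^2 - x1/u^2 - x2/u^2) (l'*(x1/u^2 - (l'^2 - x1/u^2 - x2/u^2)) - y1/u^3)"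
        using P1 Pt F eqx eqy unfolding l'_def by (simp add: Let_def)
      have R: "ec_add (a*u^4) P Q = Pt (l^2 - x1 - x2) (l*(x1 - (l^2 - x1 - x2)) - y1)"
        using P1 Pt F unfolding l_def by (simp add: Let_def)
      show ?thesis unfolding L R ll using u
        by (simp add: field_simps power2_eq_square power3_eq_cube)
    qed
  qed
qed

lemma scale_neg: "ec_neg (scale u P) = scale u (ec_neg P)"
  by (cases P) auto

lemma scale_nmult:
  fixes a u :: complex
  assumes u: "u \<noteq> 0"
  shows "ec_nmult a k (scale u P) = scale u (ec_nmult (a*u^4) k P)"
  by (induction k) (simp_all add: scale_add[OF u])

lemma scale_zmult:
  fixes a u :: complex
  assumes u: "u \<noteq> 0"
  shows "ec_zmult a k (scale u P) = scale u (ec_zmult (a*u^4) k P)"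
  by (simp add: ec_zmult_def scale_nmult[OF u] scale_neg)



inductive_set gen :: "(nat \<Rightarrow> complex) \<Rightarrow> nat set \<Rightarrow> complex set" for s :: "nat \<Rightarrow> complex" and S :: "nat set" where
  g_rat: "q \<in> \<rat> \<Longrightarrow> q \<in> gen s S"
| g_sq: "j \<in> S \<Longrightarrow> s j \<in> gen s S"
| g_add: "x \<in> gen s S \<Longrightarrow> y \<in> gen s S \<Longrightarrow> x + y \<in> gen s S"
| g_mul: "x \<in> gen s S \<Longrightarrow> y \<in> gen s S \<Longrightarrow> x * y \<in> gen s S"
| g_neg: "x \<in> gen s S \<Longrightarrow> - x \<in> gen s S"
| g_inv: "x \<in> gen s S \<Longrightarrow> inverse x \<in> gen s S"

lemma g_diff: "x \<in> gen s S \<Longrightarrow> y \<in> gen s S \<Longrightarrow> x - y \<in> gen s S"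
  by (metis g_add g_neg diff_conv_add_uminus)
lemma g_div: "x \<in> gen s S \<Longrightarrow> y \<in> gen s S \<Longrightarrow> x / y \<in> gen s S"
  by (metis g_mul g_inv divide_inverse)
lemma g_pow: "x \<in> gen s S \<Longrightarrow> x ^ n \<in> gen s S"
  by (induction n) (auto intro: g_mul g_rat)
lemma g_num: "of_rat q \<in> gen s S" by (rule g_rat) simp
lemma g_numeral: "numeral n \<in> gen s S" by (rule g_rat) simp
lemma g_0: "0 \<in> gen s S" and g_1: "1 \<in> gen s S" by (auto intro: g_rat)

lemma gen_mono: "x \<in> gen s S \<Longrightarrow> S \<subseteq> T \<Longrightarrow> x \<in> gen s T"
  by (induction rule: gen.induct) (auto intro: gen.intros)

lemma gen_empty: "x \<in> gen s {} \<Longrightarrow> x \<in> \<rat>"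
  by (induction rule: gen.induct) auto

lemma sq_pm: "(x::complex)^2 = y^2 \<Longrightarrow> x = y \<or> x = - y"
  by (simp add: power2_eq_iff)

lemma gen_insert:
  assumes sk: "(s k)^2 = of_rat dk" and notin: "s k \<notin> gen s S"
    and x: "x \<in> gen s (insert k S)"
  shows "\<exists>a b. a \<in> gen s S \<and> b \<in> gen s S \<and> x = a + b * s k"
  using x
proof (induction rule: gen.induct)
  case (g_rat q) thus ?case by (intro exI[of _ q] exI[of _ 0]) (auto intro: gen.intros)
next
  case (g_sq j)
  show ?case
  proof (cases "j = k")
    case True thus ?thesis by (intro exI[of _ 0] exI[of _ 1]) (auto intro: g_0 g_1)
  next
    case False thus ?thesis using g_sq by (intro exI[of _ "s j"] exI[of _ 0]) (auto intro: gen.intros g_0)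
  qed
next
  case (g_add x y)
  then obtain a b a' b' where "a \<in> gen s S" "b \<in> gen s S" "x = a + b * s k"
    "a' \<in> gen s S" "b' \<in> gen s S" "y = a' + b' * s k" by blast
  thus ?case by (intro exI[of _ "a + a'"] exI[of _ "b + b'"]) (auto intro: gen.intros simp: algebra_simps)
next
  case (g_mul x y)
  then obtain a b a' b' where ab: "a \<in> gen s S" "b \<in> gen s S" "x = a + b * s k"
    "a' \<in> gen s S" "b' \<in> gen s S" "y = a' + b' * s k" by blast
  have "x * y = (a*a' + b*b'*of_rat dk) + (a*b' + a'*b) * s k"
    using ab(3,6) sk[symmetric] by (simp add: algebra_simps power2_eq_square)
  moreover have "a*a' + b*b'*of_rat dk \<in> gen s S"
    by (rule gen.g_add[OF gen.g_mul[OF ab(1) ab(4)] gen.g_mul[OF gen.g_mul[OF ab(2) ab(5)] g_num]])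
  moreover have "a*b' + a'*b \<in> gen s S"
    by (rule gen.g_add[OF gen.g_mul[OF ab(1) ab(5)] gen.g_mul[OF ab(4) ab(2)]])
  ultimately show ?case by blast
next
  case (g_neg x)
  then obtain a b where "a \<in> gen s S" "b \<in> gen s S" "x = a + b * s k" by blast
  thus ?case by (intro exI[of _ "-a"] exI[of _ "-b"]) (auto intro: gen.intros)
next
  case (g_inv x)
  then obtain a b where ab: "a \<in> gen s S" "b \<in> gen s S" "x = a + b * s k" by blast
  show ?case
  proof (cases "x = 0")
    case True thus ?thesis by (intro exI[of _ 0] exI[of _ 0]) (auto intro: g_0)
  next
    case False
    define D where "D = a^2 - b^2 * of_rat dk"
    have D0: "D \<noteq> 0"
    proof
      assume "D = 0"
      show False
      proof (cases "b = 0")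
        case True with \<open>D = 0\<close> ab(3) False show False unfolding D_def by simp
      next
        case bn: False
        have "(a/b)^2 = (s k)^2" using \<open>D = 0\<close> sk bn unfolding D_def
          by (simp add: field_simps)
        hence "s k = a/b \<or> s k = -(a/b)" using sq_pm by metis
        moreover have "a/b \<in> gen s S" "-(a/b) \<in> gen s S" using ab by (auto intro: g_div gen.g_neg)
        ultimately show False using notin by auto
      qed
    qed
    have "inverse x = a/D + (-b/D) * s k"
    proof -
      have xD: "x * (a - b * s k) = D"
        using ab(3) sk[symmetric] unfolding D_def by (simp add: algebra_simps power2_eq_square)
      have "x * (a/D + (-b/D) * s k) = (x * (a - b * s k)) / D"
        using D0 by (simp add: field_simps)
      also have "\<dots> = 1" using xD D0 by simp
      finally have "x * (a/D + (-b/D) * s k) = 1" .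
      thus ?thesis using False by (metis inverse_unique)
    qed
    moreover have "D \<in> gen s S" unfolding D_def using ab by (blast intro: g_diff gen.g_mul g_pow g_num)
    ultimately show ?thesis using ab
      by (intro exI[of _ "a/D"] exI[of _ "-b/D"]) (auto intro: g_div g_neg)
  qed
qed

lemma no_sqrt_in_gen:
  fixes s :: "nat \<Rightarrow> complex" and d :: "nat \<Rightarrow> rat"
  assumes sk: "\<And>j. (s j)^2 = of_rat (d j)"
    and H: "\<And>U. finite U \<Longrightarrow> U \<noteq> {} \<Longrightarrow> \<not> is_rat_square (\<Prod>j\<in>U. d j)"
    and S: "finite S"
  shows "\<And>U t. finite U \<Longrightarrow> U \<noteq> {} \<Longrightarrow> U \<inter> S = {} \<Longrightarrow> t \<in> gen s S \<Longrightarrow>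
           t^2 \<noteq> of_rat (\<Prod>j\<in>U. d j)"
  using S
proof (induction S rule: finite_induct)
  case empty
  obtain r where r: "t = of_rat r" using gen_empty[OF empty.prems(4)] Rats_cases by blast
  show ?case
  proof
    assume "t^2 = of_rat (\<Prod>j\<in>U. d j)"
    hence "r^2 = (\<Prod>j\<in>U. d j)" using r by (metis of_rat_eq_iff of_rat_power)
    hence "is_rat_square (\<Prod>j\<in>U. d j)" unfolding is_rat_square_def by metis
    with H[OF empty.prems(1,2)] show False by simp
  qed
next
  case (insert k S)
  have notin: "s k \<notin> gen s S"
  proof
    assume "s k \<in> gen s S"
    from insert.IH[of "{k}" "s k"] this insert.hyps sk show False by simp
  qed
  obtain a b where ab: "a \<in> gen s S" "b \<in> gen s S" "t = a + b * s k"
    using gen_insert[OF sk notin insert.prems(4)] by blast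
  show ?case
  proof
    assume t2: "t^2 = of_rat (\<Prod>j\<in>U. d j)"
    have kU: "k \<notin> U" "U \<inter> S = {}" using insert.prems(3) by auto
    have exp: "t^2 = (a^2 + b^2 * of_rat (d k)) + 2*a*b * s k"
      using ab(3) sk[of k, symmetric] by (simp add: power2_eq_square algebra_simps)
    consider "a \<noteq> 0" "b \<noteq> 0" | "b = 0" | "a = 0" by blast
    thus False
    proof cases
      case 1
      have e2: "2*a*b * s k = of_rat (\<Prod>j\<in>U. d j) - (a^2 + b^2 * of_rat (d k))"
        using exp t2 by (simp add: algebra_simps)
      have "s k = (of_rat (\<Prod>j\<in>U. d j) - (a^2 + b^2 * of_rat (d k))) / (2*a*b)"
        using 1 by (simp add: e2[symmetric])
      moreover have "\<dots> \<in> gen s S"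
        by (intro g_div g_diff gen.g_add gen.g_mul g_pow g_num g_numeral ab(1,2))
      ultimately show False using notin by simp
    next
      case 2
      hence "a^2 = of_rat (\<Prod>j\<in>U. d j)" using exp t2 by simp
      thus False using insert.IH[OF insert.prems(1,2) kU(2) ab(1)] by simp
    next
      case 3
      hence "b^2 * of_rat (d k) = of_rat (\<Prod>j\<in>U. d j)" using exp t2 by simp
      hence "(b * of_rat (d k))^2 = of_rat (\<Prod>j\<in>insert k U. d j)"
        using kU(1) insert.prems(1) sk[of k]
        by (simp add: power_mult_distrib of_rat_mult power2_eq_square algebra_simps)
      moreover have "b * of_rat (d k) \<in> gen s S" using ab by (auto intro: g_mul g_num)
      moreover have "insert k U \<inter> S = {}" using kU insert.hyps by auto
      ultimately show False using insert.IH[of "insert k U" "b * of_rat (d k)"] insert.prems(1) by simp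
    qed
  qed
qed



definition inK :: "complex set \<Rightarrow> complex ecpt \<Rightarrow> bool" where
  "inK K P = (case P of Infty \<Rightarrow> True | Pt x y \<Rightarrow> x \<in> K \<and> y \<in> K)"

lemma inK_add:
  assumes a: "a \<in> gen s S" and P: "inK (gen s S) P" and Q: "inK (gen s S) Q"
  shows "inK (gen s S) (ec_add a P Q)"
proof (cases P)
  case Infty thus ?thesis using Q by simp
next
  case (Pt x1 y1)
  note P1 = Pt
  show ?thesis
  proof (cases Q)
    case Infty thus ?thesis using P P1 by simp
  next
    case (Pt x2 y2)
    have m: "x1 \<in> gen s S" "y1 \<in> gen s S" "x2 \<in> gen s S" "y2 \<in> gen s S"
      using P Q P1 Pt by (auto simp: inK_def)
    define l where "l = (if x1 = x2 then (3*x1^2 + a)/(2*y1) else (y2 - y1)/(x2 - x1))"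
    have lK: "l \<in> gen s S" unfolding l_def
      using m a by (auto intro!: g_div g_diff gen.g_add gen.g_mul g_pow g_numeral)
    define x3 where "x3 = l^2 - x1 - x2"
    define y3 where "y3 = l*(x1 - x3) - y1"
    have x3K: "x3 \<in> gen s S" unfolding x3_def using lK m by (intro g_diff g_pow)
    have y3K: "y3 \<in> gen s S" unfolding y3_def using lK m x3K by (intro g_diff gen.g_mul)
    have "ec_add a P Q = (if x1 = x2 \<and> y1 = - y2 then Infty else Pt x3 y3)"
      using P1 Pt unfolding l_def x3_def y3_def by (simp add: Let_def)
    thus ?thesis using x3K y3K unfolding inK_def by simp
  qed
qed

lemma inK_neg: "inK (gen s S) P \<Longrightarrow> inK (gen s S) (ec_neg P)"
  by (cases P) (auto simp: inK_def intro: gen.g_neg)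

lemma inK_nmult: "a \<in> gen s S \<Longrightarrow> inK (gen s S) P \<Longrightarrow> inK (gen s S) (ec_nmult a k P)"
  by (induction k) (auto simp: inK_def[of _ Infty] intro: inK_add)

lemma inK_zmult: "a \<in> gen s S \<Longrightarrow> inK (gen s S) P \<Longrightarrow> inK (gen s S) (ec_zmult a k P)"
  by (simp add: ec_zmult_def inK_nmult inK_neg)



lemma sqrt_alg: "(z::complex)^2 = of_rat r \<Longrightarrow> algebraic z"
proof (rule algebraicI'[of "[:-of_rat r, 0, 1:]"])
  fix i show "coeff [:-of_rat r, 0, 1:] i \<in> \<rat>"
    by (auto simp: coeff_pCons split: nat.splits)
qed (auto simp: power2_eq_square)

lemma Qbar_rat: "q \<in> \<rat> \<Longrightarrow> q \<in> Qbar"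
  unfolding Qbar_def by (auto intro: rat_imp_algebraic)

lemma GQ_basic:
  assumes "is_GQ \<sigma>"
  shows GQ_add: "x \<in> Qbar \<Longrightarrow> y \<in> Qbar \<Longrightarrow> \<sigma> (x + y) = \<sigma> x + \<sigma> y"
    and GQ_mult: "x \<in> Qbar \<Longrightarrow> y \<in> Qbar \<Longrightarrow> \<sigma> (x * y) = \<sigma> x * \<sigma> y"
    and GQ_inj: "x \<in> Qbar \<Longrightarrow> y \<in> Qbar \<Longrightarrow> \<sigma> x = \<sigma> y \<Longrightarrow> x = y"
  using assms unfolding is_GQ_def bij_betw_def inj_on_def by auto

lemma GQ_rat:
  assumes G: "is_GQ \<sigma>" and q: "q \<in> \<rat>"
  shows "\<sigma> q = q"
proof -
  have Q0: "(0::complex) \<in> Qbar" "(1::complex) \<in> Qbar" by (auto intro: Qbar_rat)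
  have s0: "\<sigma> 0 = 0"
    using GQ_add[OF G Q0(1) Q0(1)] by simp
  have "\<sigma> 1 = \<sigma> 1 * \<sigma> 1" using GQ_mult[OF G Q0(2) Q0(2)] by simp
  moreover have "\<sigma> 1 \<noteq> 0"
  proof
    assume "\<sigma> 1 = 0"
    hence "(1::complex) = 0" using GQ_inj[OF G Q0(2) Q0(1)] s0 by simp
    thus False by simp
  qed
  ultimately have s1: "\<sigma> 1 = 1"
    by (metis mult_cancel_right1)
  have snat: "\<sigma> (of_nat n) = of_nat n" for n
  proof (induction n)
    case 0 thus ?case using s0 by simp
  next
    case (Suc n)
    have "\<sigma> (of_nat (Suc n)) = \<sigma> (1 + of_nat n)" by simp
    also have "\<dots> = 1 + of_nat n"
      using GQ_add[OF G Q0(2), of "of_nat n"] Suc s1 by (simp add: Qbar_rat)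
    finally show ?case by simp
  qed
  have sneg: "\<sigma> (- x) = - \<sigma> x" if "x \<in> Qbar" for x
  proof -
    have mx: "- x \<in> Qbar" using that unfolding Qbar_def by auto
    have "\<sigma> (x + - x) = \<sigma> x + \<sigma> (- x)" by (rule GQ_add[OF G that mx])
    thus ?thesis using s0 by (simp add: eq_neg_iff_add_eq_0 add.commute)
  qed
  have sint: "\<sigma> (of_int k) = of_int k" for k
  proof (cases "k \<ge> 0")
    case True
    then obtain n where "k = int n" using nat_0_le by metis
    thus ?thesis using snat by simp
  next
    case False
    hence "k = - int (nat (-k))" by simp
    then obtain n where "k = - int n" by blast
    thus ?thesis using snat sneg[of "of_nat n"] by (simp add: Qbar_rat)
  qed
  have sinv: "\<sigma> (inverse x) = inverse (\<sigma> x)" if "x \<in> Qbar" "x \<noteq> 0" for x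
  proof -
    have ix: "inverse x \<in> Qbar" using that unfolding Qbar_def by auto
    have "\<sigma> (x * inverse x) = \<sigma> x * \<sigma> (inverse x)" by (rule GQ_mult[OF G that(1) ix])
    hence e: "1 = \<sigma> x * \<sigma> (inverse x)" using that s1 by simp
    hence "\<sigma> x \<noteq> 0" by auto
    with e show ?thesis by (metis inverse_unique)
  qed
  obtain a b where ab: "b > 0" "q = of_int a / of_int b" using Rats_cases'[OF q] by blast
  have "\<sigma> (of_int a * inverse (of_int b)) = \<sigma> (of_int a) * \<sigma> (inverse (of_int b))"
    by (rule GQ_mult[OF G]) (auto intro: Qbar_rat simp: Rats_inverse)
  also have "\<dots> = of_int a * inverse (of_int b)"
    using sint sinv[of "of_int b"] ab(1) by (simp add: Qbar_rat)
  finally show ?thesis using ab(2) by (simp add: divide_inverse)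
qed

lemma GQ_sq:
  assumes G: "is_GQ \<sigma>" and z: "z^2 = of_rat r"
  shows "\<sigma> z = z \<or> \<sigma> z = - z"
proof -
  have zq: "z \<in> Qbar" using sqrt_alg[OF z] unfolding Qbar_def by simp
  have "\<sigma> (z * z) = \<sigma> z * \<sigma> z" by (rule GQ_mult[OF G zq zq])
  moreover have "\<sigma> (z * z) = z * z" using z GQ_rat[OF G, of "of_rat r"]
    by (simp add: power2_eq_square)
  ultimately have "(\<sigma> z)^2 = z^2" by (simp add: power2_eq_square)
  thus ?thesis by (rule sq_pm)
qed



lemma sq_mult_sq: "is_rat_square x \<Longrightarrow> is_rat_square (x * y^2)"
  unfolding is_rat_square_def by (metis power_mult_distrib)

lemma class_eq:
  assumes v: "v \<noteq> 0" and w: "w \<noteq> 0" and sq: "is_rat_square (v*w)"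
  shows "sq_class v = sq_class w"
proof -
  obtain r where r: "v*w = r^2" using sq unfolding is_rat_square_def by blast
  have r0: "r \<noteq> 0" using r v w by auto
  have e1: "v/z = (w/z) * (r/w)^2" for z
  proof -
    have "(w/z) * (r/w)^2 = r^2/(w*z)" using w by (simp add: field_simps power2_eq_square)
    also have "\<dots> = (v*w)/(w*z)" using r by simp
    also have "\<dots> = v/z" using w by simp
    finally show ?thesis by (rule sym)
  qed
  have e2: "w/z = (v/z) * (w/r)^2" for z
  proof -
    have "(v/z) * (w/r)^2 = (v*w)*w/(r^2*z)" using r0 by (simp add: field_simps power2_eq_square)
    also have "\<dots> = w/z" using r r0 by simp
    finally show ?thesis by (rule sym)
  qed
  show ?thesis unfolding sq_class_def
    using sq_mult_sq e1 e2 by (metis (no_types, lifting))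
qed

lemma choose_fixed:
  assumes Gs: "\<forall>i<n. is_GQ (\<sigma> i)" and V: "sq_subspace V" and D: "sq_dim_is V (n+1)"
  shows "\<exists>d s. d \<in> V \<and> \<not> is_rat_square d \<and> s^2 = of_rat d \<and> s \<noteq> 0 \<and> (\<forall>i<n. \<sigma> i s = s)"
proof -
  define C where "C = sq_class ` V"
  have fin: "finite C" and cardC: "card C = 2^(n+1)" using D unfolding sq_dim_is_def C_def by auto
  define sq where "sq v = csqrt (of_rat v)" for v :: rat
  define sig where "sig v = {i. i < n \<and> \<sigma> i (sq v) = sq v}" for v
  define rep where "rep X = (SOME v. v \<in> V \<and> sq_class v = X)" for X
  have rep: "rep X \<in> V \<and> sq_class (rep X) = X" if "X \<in> C" for X
  proof -
    from that obtain u where "u \<in> V" "sq_class u = X" unfolding C_def by blast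
    thus ?thesis unfolding rep_def by (rule someI[of "\<lambda>v. v \<in> V \<and> sq_class v = X", OF conjI])
  qed
  define f where "f X = sig (rep X)" for X
  have fC: "f ` C \<subseteq> Pow {..<n}" unfolding f_def sig_def by auto
  have "\<not> inj_on f C"
  proof
    assume "inj_on f C"
    hence "card C \<le> card (Pow {..<n::nat})" using fC by (intro card_inj_on_le) auto
    also have "\<dots> = 2^n" by (simp add: card_Pow)
    finally show False using cardC by simp
  qed
  then obtain X1 X2 where X: "X1 \<in> C" "X2 \<in> C" "X1 \<noteq> X2" "f X1 = f X2"
    unfolding inj_on_def by blast
  define v where "v = rep X1"
  define w where "w = rep X2"
  have vV: "v \<in> V" "w \<in> V" using rep X unfolding v_def w_def by auto
  have vw: "sq_class v \<noteq> sq_class w" using rep X unfolding v_def w_def by auto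
  have v0: "v \<noteq> 0" "w \<noteq> 0" using vV V unfolding sq_subspace_def by auto
  have sig_eq: "sig v = sig w" using X(4) unfolding f_def v_def w_def by simp
  define d where "d = v * w"
  define s where "s = sq v * sq w"
  have dV: "d \<in> V" using vV V unfolding sq_subspace_def d_def by auto
  have nsq: "\<not> is_rat_square d" using class_eq[OF v0] vw unfolding d_def by blast
  have sqv: "(sq v)^2 = of_rat v" "(sq w)^2 = of_rat w" unfolding sq_def by simp_all
  have s2: "s^2 = of_rat d" unfolding s_def d_def using sqv by (simp add: power_mult_distrib of_rat_mult)
  have sq0: "sq v \<noteq> 0" "sq w \<noteq> 0" using v0 unfolding sq_def by auto
  have s0: "s \<noteq> 0" using sq0 unfolding s_def by simp
  have fx: "\<sigma> i s = s" if i: "i < n" for i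
  proof -
    have G: "is_GQ (\<sigma> i)" using Gs i by simp
    have qb: "sq v \<in> Qbar" "sq w \<in> Qbar" using sqrt_alg sqv unfolding Qbar_def by auto
    have e: "\<sigma> i s = \<sigma> i (sq v) * \<sigma> i (sq w)" unfolding s_def by (rule GQ_mult[OF G qb])
    have pv: "\<sigma> i (sq v) = sq v \<or> \<sigma> i (sq v) = - sq v" by (rule GQ_sq[OF G sqv(1)])
    have pw: "\<sigma> i (sq w) = sq w \<or> \<sigma> i (sq w) = - sq w" by (rule GQ_sq[OF G sqv(2)])
    have iff: "\<sigma> i (sq v) = sq v \<longleftrightarrow> \<sigma> i (sq w) = sq w"
      using sig_eq i unfolding sig_def by blast
    show ?thesis using pv pw iff e unfolding s_def by auto
  qed
  show ?thesis using dV nsq s2 s0 fx by blast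
qed



lemma inK_mono: "inK (gen s S) P \<Longrightarrow> S \<subseteq> T \<Longrightarrow> inK (gen s T) P"
  by (cases P) (auto simp: inK_def intro: gen_mono)

lemma fold_inK:
  assumes aK: "a \<in> \<rat>" and QK: "\<And>i. inK (gen s {i}) (ec_zmult a (c i) (Q i))"
  shows "inK (gen s (set xs)) (foldr (\<lambda>i R. ec_add a (ec_zmult a (c i) (Q i)) R) xs Infty)"
proof (induction xs)
  case Nil thus ?case by (simp add: inK_def)
next
  case (Cons i xs)
  have a: "a \<in> gen s (set (i # xs))" using aK by (rule g_rat)
  have A: "inK (gen s (set (i # xs))) (ec_zmult a (c i) (Q i))"
    using inK_mono[OF QK[of i]] by simp
  have R: "inK (gen s (set (i # xs))) (foldr (\<lambda>i R. ec_add a (ec_zmult a (c i) (Q i)) R) xs Infty)"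
    using inK_mono[OF Cons.IH] by auto
  show ?case using inK_add[OF a A R] by simp
qed

lemma indep_core:
  assumes aK: "a \<in> \<rat>"
    and Qk: "\<And>i k. ec_zmult a k (Q i) = Infty \<Longrightarrow> k = 0"
    and Qy: "\<And>i k X Y. ec_zmult a k (Q i) = Pt X Y \<Longrightarrow> \<exists>y0\<in>\<rat>. y0 \<noteq> 0 \<and> Y = y0 * s i"
    and QK: "\<And>i. inK (gen s {i}) (ec_zmult a (c i) (Q i))"
    and nosq: "\<And>i S. finite S \<Longrightarrow> i \<notin> S \<Longrightarrow> s i \<notin> gen s S"
  shows "distinct xs \<Longrightarrow> foldr (\<lambda>i R. ec_add a (ec_zmult a (c i) (Q i)) R) xs Infty = Infty
     \<Longrightarrow> \<forall>i\<in>set xs. c i = 0"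
proof (induction xs)
  case Nil thus ?case by simp
next
  case (Cons i xs)
  define R where "R = foldr (\<lambda>i R. ec_add a (ec_zmult a (c i) (Q i)) R) xs Infty"
  have RK: "inK (gen s (set xs)) R" unfolding R_def by (rule fold_inK[OF aK QK])
  have e: "ec_add a (ec_zmult a (c i) (Q i)) R = Infty" using Cons.prems(2) unfolding R_def by simp
  show ?case
  proof (cases "ec_zmult a (c i) (Q i)")
    case Infty
    hence "c i = 0" by (rule Qk)
    moreover have "R = Infty" using e Infty by simp
    ultimately show ?thesis using Cons.IH Cons.prems(1) unfolding R_def by simp
  next
    case (Pt X Y)
    note AP = Pt
    obtain y0 where y0: "y0 \<in> \<rat>" "y0 \<noteq> 0" "Y = y0 * s i" using Qy[OF Pt] by blast
    obtain x2 y2 where R2: "R = Pt x2 y2" and yy: "Y = - y2"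
    proof (cases R)
      case Infty thus ?thesis using e AP by simp
    next
      case (Pt x2 y2)
      thus ?thesis using e AP that by (auto split: if_splits simp: Let_def)
    qed
    have "y2 \<in> gen s (set xs)" using RK R2 by (simp add: inK_def)
    hence "- y2 / y0 \<in> gen s (set xs)" using y0(1) by (intro g_div gen.g_neg g_rat[of y0])
    moreover have "- y2 / y0 = s i" using yy y0 by (simp add: field_simps)
    ultimately have "s i \<in> gen s (set xs)" by simp
    moreover have "i \<notin> set xs" using Cons.prems(1) by simp
    ultimately show ?thesis using nosq[of "set xs" i] by simp
  qed
qed



lemma neg_Pt0: "ec_neg Q = Pt x 0 \<Longrightarrow> Q = Pt x 0"
  by (cases Q) auto

lemma twist_point:
  fixes a b u :: complex and r :: rat
  assumes ab: "a \<in> \<rat>" "b \<in> \<rat>" and disc: "4*a^3 + 27*b^2 \<noteq> 0"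
    and u: "u^2 = of_rat r" "u \<noteq> 0"
    and P: "P \<in> points_over (twist_a a (of_rat r)) (twist_b b (of_rat r)) \<rat>"
    and inf: "\<forall>k::nat. k > 0 \<longrightarrow> ec_nmult (twist_a a (of_rat r)) k P \<noteq> Infty"
  shows "on_curve a b (scale u P)"
    and "\<exists>X Y0. X \<in> \<rat> \<and> Y0 \<in> \<rat> \<and> scale u P = Pt X (Y0 * u)"
    and "\<forall>k. ec_zmult a k (scale u P) = Infty \<longrightarrow> k = 0"
    and "\<forall>k X Y. ec_zmult a k (scale u P) = Pt X Y \<longrightarrow> (\<exists>y0\<in>\<rat>. y0 \<noteq> 0 \<and> Y = y0 * u)"
proof -
  define dc where "dc = (of_rat r :: complex)"
  define a' where "a' = twist_a a dc"
  define b' where "b' = twist_b b dc"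
  have dc0: "dc \<noteq> 0" using u unfolding dc_def by auto
  have u2: "u^2 = dc" using u unfolding dc_def by simp
  have u4: "u^4 = dc^2" using u2 by (metis power2_eq_square power4_eq_xxxx mult.assoc)
  have u6: "u^6 = dc^3" using u2 by (metis power_mult numeral_times_numeral semiring_norm(12) semiring_norm(13) num_double)
  have a'u: "a' = a * u^4" unfolding a'_def twist_a_def u4 by simp
  have b'u: "b' = b * u^6" unfolding b'_def twist_b_def u6 by simp
  have a'Q: "a' \<in> \<rat>" unfolding a'_def twist_a_def dc_def using ab by simp
  have disc': "4*a'^3 + 27*b'^2 \<noteq> 0"
  proof -
    have "4*a'^3 + 27*b'^2 = dc^6 * (4*a^3 + 27*b^2)"
      unfolding a'_def b'_def twist_a_def twist_b_def by (simp add: algebra_simps power_mult_distrib flip: power_mult)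
    thus ?thesis using disc dc0 by simp
  qed
  have Pc: "on_curve a' b' P" using P unfolding points_over_def a'_def b'_def dc_def by simp
  have infP: "\<forall>k::nat. k > 0 \<longrightarrow> ec_nmult a' k P \<noteq> Infty" using inf unfolding a'_def dc_def by simp
  have sc: "scale u (Pt x y) = Pt (x/dc) ((y/dc^2) * u)" for x y
  proof -
    have "y/u^3 = (y/dc^2) * u"
    proof -
      have "u^3 = u * dc" using u2 by (simp add: power2_eq_square power3_eq_cube)
      hence "y/u^3 = y/(u*dc)" by simp
      also have "\<dots> = (y/dc^2) * u" using u(2) dc0 u2 by (simp add: field_simps power2_eq_square)
      finally show ?thesis .
    qed
    thus ?thesis using u2 by simp
  qed
  define s0 :: "nat \<Rightarrow> complex" where "s0 = (\<lambda>_. 0)"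
  have ratK: "inK (gen s0 {}) (ec_zmult a' k P)" for k
  proof (rule inK_zmult)
    show "a' \<in> gen s0 {}" using a'Q by (rule g_rat)
    show "inK (gen s0 {}) P" using P unfolding points_over_def inK_def
      by (auto split: ecpt.splits intro: g_rat)
  qed
  have zrat: "ec_zmult a' k P = Pt x y \<Longrightarrow> x \<in> \<rat> \<and> y \<in> \<rat>" for k x y
    using ratK[of k] by (auto simp: inK_def dest: gen_empty)
  have zm: "ec_zmult a k (scale u P) = scale u (ec_zmult a' k P)" for k
    using scale_zmult[OF u(2)] a'u by simp
  have no2: "ec_zmult a' k P \<noteq> Pt x 0" for k x
  proof
    assume h: "ec_zmult a' k P = Pt x 0"
    define kk where "kk = (if k \<ge> 0 then nat k else nat (-k))"
    have "ec_nmult a' kk P = Pt x 0" using h unfolding ec_zmult_def kk_def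
      by (auto split: if_splits dest: neg_Pt0)
    moreover have "kk > 0"
    proof (rule ccontr)
      assume "\<not> kk > 0"
      hence "kk = 0" by simp
      with \<open>ec_nmult a' kk P = Pt x 0\<close> show False by simp
    qed
    ultimately have "ec_nmult a' (2*kk) P = Infty" using no_2torsion[OF Pc disc'] by blast
    with infP \<open>kk > 0\<close> show False by simp
  qed
  show "on_curve a b (scale u P)"
  proof (cases P)
    case Infty thus ?thesis by (simp add: on_curve_def)
  next
    case (Pt x y)
    have c: "y^2 = x^3 + a'*x + b'" using Pc Pt by (simp add: on_curve_def)
    have "(y/u^3)^2 = (x/u^2)^3 + a*(x/u^2) + b"
    proof -
      have "(y/u^3)^2 = y^2 / u^6" by (simp add: power_divide flip: power_mult)
      also have "\<dots> = (x^3 + a*u^4*x + b*u^6)/u^6" using c a'u b'u by simp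
      also have "\<dots> = (x/u^2)^3 + a*(x/u^2) + b" using u(2)
        by (simp add: field_simps power_divide flip: power_mult power_add)
      finally show ?thesis .
    qed
    thus ?thesis using Pt by (simp add: on_curve_def)
  qed
  show "\<exists>X Y0. X \<in> \<rat> \<and> Y0 \<in> \<rat> \<and> scale u P = Pt X (Y0 * u)"
  proof (cases P)
    case Infty
    have "ec_nmult a' 1 P = Infty" using Infty by simp
    with infP have False by (meson zero_less_one)
    thus ?thesis by simp
  next
    case (Pt x y)
    have "x \<in> \<rat>" "y \<in> \<rat>" using P Pt unfolding points_over_def by auto
    thus ?thesis using Pt sc unfolding dc_def by (intro exI[of _ "x/dc"] exI[of _ "y/dc^2"]) (auto simp: dc_def)
  qed
  show "\<forall>k. ec_zmult a k (scale u P) = Infty \<longrightarrow> k = 0"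
  proof (intro allI impI)
    fix k assume "ec_zmult a k (scale u P) = Infty"
    hence h: "ec_zmult a' k P = Infty" using zm[of k] by (cases "ec_zmult a' k P") auto
    show "k = 0"
    proof (cases "k \<ge> 0")
      case True
      hence "ec_nmult a' (nat k) P = Infty" using h unfolding ec_zmult_def by simp
      hence "nat k = 0" using infP by (meson neq0_conv)
      thus ?thesis using True by simp
    next
      case False
      hence "ec_neg (ec_nmult a' (nat (-k)) P) = Infty" using h unfolding ec_zmult_def by simp
      hence "ec_nmult a' (nat (-k)) P = Infty" by (cases "ec_nmult a' (nat (-k)) P") auto
      moreover have "nat (-k) > 0" using False by simp
      ultimately show ?thesis using infP by blast
    qed
  qed
  show "\<forall>k X Y. ec_zmult a k (scale u P) = Pt X Y \<longrightarrow> (\<exists>y0\<in>\<rat>. y0 \<noteq> 0 \<and> Y = y0 * u)"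
  proof (intro allI impI)
    fix k X Y assume h: "ec_zmult a k (scale u P) = Pt X Y"
    then obtain x y where xy: "ec_zmult a' k P = Pt x y" using zm[of k] by (cases "ec_zmult a' k P") auto
    have rat: "x \<in> \<rat>" "y \<in> \<rat>" using zrat[OF xy] by auto
    have y0: "y \<noteq> 0" using no2[of k x] xy by auto
    have "Y = (y/dc^2) * u" using h zm[of k] xy sc by simp
    moreover have "y/dc^2 \<in> \<rat>" using rat unfolding dc_def by simp
    moreover have "y/dc^2 \<noteq> 0" using y0 dc0 by simp
    ultimately show "\<exists>y0\<in>\<rat>. y0 \<noteq> 0 \<and> Y = y0 * u" by blast
  qed
qed



theorem mainTheorem7:
  fixes a b :: complex
  assumes "elliptic_over_Q a b"
    and "\<forall>n::nat. n > 0 \<longrightarrow>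
           (\<exists>V :: nat \<Rightarrow> rat set.
              (\<forall>i. sq_subspace (V i) \<and> sq_dim_is (V i) (n + 1)) \<and>
              sq_independent V \<and>
              (\<forall>i. \<forall>v \<in> V i. \<not> is_rat_square v \<longrightarrow>
                  positive_rank (twist_a a (of_rat v)) (twist_b b (of_rat v)) \<rat>))"
  shows "\<forall>n::nat. n > 0 \<longrightarrow> (\<forall>\<sigma> :: nat \<Rightarrow> complex \<Rightarrow> complex.
           (\<forall>i<n. is_GQ (\<sigma> i)) \<longrightarrow> infinite_rank a b (fixed_field n \<sigma>))"
proof (intro allI impI)
  fix n :: nat and \<sigma> :: "nat \<Rightarrow> complex \<Rightarrow> complex"
  assume n: "n > 0" and Gs: "\<forall>i<n. is_GQ (\<sigma> i)"
  have ab: "a \<in> \<rat>" "b \<in> \<rat>" and disc: "4*a^3 + 27*b^2 \<noteq> 0"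
    using assms(1) unfolding elliptic_over_Q_def by auto
  obtain V :: "nat \<Rightarrow> rat set" where V: "\<forall>i. sq_subspace (V i) \<and> sq_dim_is (V i) (n + 1)"
    and indep: "sq_independent V"
    and pos: "\<forall>i. \<forall>v \<in> V i. \<not> is_rat_square v \<longrightarrow>
                  positive_rank (twist_a a (of_rat v)) (twist_b b (of_rat v)) \<rat>"
    using assms(2) n by blast
  have "\<forall>j. \<exists>d s. d \<in> V j \<and> \<not> is_rat_square d \<and> s^2 = of_rat d \<and> s \<noteq> 0 \<and> (\<forall>i<n. \<sigma> i s = s)"
    using choose_fixed[OF Gs] V by blast
  then obtain d :: "nat \<Rightarrow> rat" and s :: "nat \<Rightarrow> complex" where
    ds: "\<And>j. d j \<in> V j \<and> \<not> is_rat_square (d j) \<and> (s j)^2 = of_rat (d j) \<and> s j \<noteq> 0 \<and> (\<forall>i<n. \<sigma> i (s j) = s j)"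
    by metis
  have "\<forall>j. \<exists>P \<in> points_over (twist_a a (of_rat (d j))) (twist_b b (of_rat (d j))) \<rat>.
            \<forall>k::nat. k > 0 \<longrightarrow> ec_nmult (twist_a a (of_rat (d j))) k P \<noteq> Infty"
    using pos ds unfolding positive_rank_def by blast
  then obtain P' where P': "\<And>j. P' j \<in> points_over (twist_a a (of_rat (d j))) (twist_b b (of_rat (d j))) \<rat>
       \<and> (\<forall>k::nat. k > 0 \<longrightarrow> ec_nmult (twist_a a (of_rat (d j))) k (P' j) \<noteq> Infty)"
    by metis
  define Q where "Q j = scale (s j) (P' j)" for j
  note tp = twist_point[OF ab disc conjunct1[OF conjunct2[OF conjunct2[OF ds]]]
       conjunct1[OF conjunct2[OF conjunct2[OF conjunct2[OF ds]]]] conjunct1[OF P'] conjunct2[OF P']]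
  have Qon: "\<And>j. on_curve a b (Q j)" using tp(1) unfolding Q_def .
  have Qform: "\<And>j. \<exists>X Y0. X \<in> \<rat> \<and> Y0 \<in> \<rat> \<and> Q j = Pt X (Y0 * s j)" using tp(2) unfolding Q_def .
  have Qk: "\<And>i k. ec_zmult a k (Q i) = Infty \<Longrightarrow> k = 0" using tp(3) unfolding Q_def by blast
  have Qy: "\<And>i k X Y. ec_zmult a k (Q i) = Pt X Y \<Longrightarrow> \<exists>y0\<in>\<rat>. y0 \<noteq> 0 \<and> Y = y0 * s i"
    using tp(4) unfolding Q_def by blast
  have H: "\<And>U. finite U \<Longrightarrow> U \<noteq> {} \<Longrightarrow> \<not> is_rat_square (\<Prod>j\<in>U. d j)"
  proof
    fix U :: "nat set" assume U: "finite U" "U \<noteq> {}" and sq: "is_rat_square (\<Prod>j\<in>U. d j)"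
    have "\<forall>i\<in>U. is_rat_square (d i)"
      using indep U(1) sq ds unfolding sq_independent_def by blast
    with U(2) ds show False by blast
  qed
  have nosq: "\<And>i S. finite S \<Longrightarrow> i \<notin> S \<Longrightarrow> s i \<notin> gen s S"
  proof
    fix i S assume S: "finite S" "i \<notin> S" and si: "s i \<in> gen s S"
    have "(s i)^2 \<noteq> of_rat (\<Prod>j\<in>{i}. d j)"
      using no_sqrt_in_gen[of s d S "{i}" "s i"] ds H S si by auto
    with ds show False by simp
  qed
  have QK: "\<And>i. inK (gen s {i}) (Q i)"
  proof -
    fix i
    obtain X Y0 where XY: "X \<in> \<rat>" "Y0 \<in> \<rat>" "Q i = Pt X (Y0 * s i)" using Qform by blast
    have "X \<in> gen s {i}" using XY(1) by (rule g_rat)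
    moreover have "Y0 * s i \<in> gen s {i}" using XY(2) by (intro gen.g_mul g_rat[of Y0] g_sq) auto
    ultimately show "inK (gen s {i}) (Q i)" using XY(3) by (simp add: inK_def)
  qed
  show "infinite_rank a b (fixed_field n \<sigma>)"
    unfolding infinite_rank_def
  proof (rule allI)
    fix m :: nat
    show "\<exists>Ps. (\<forall>i<m. Ps i \<in> points_over a b (fixed_field n \<sigma>)) \<and>
        (\<forall>c::nat \<Rightarrow> int. foldr (\<lambda>i R. ec_add a (ec_zmult a (c i) (Ps i)) R) [0..<m] Infty = Infty
            \<longrightarrow> (\<forall>i<m. c i = 0))"
    proof (rule exI[of _ Q], rule conjI)
    show "\<forall>i<m. Q i \<in> points_over a b (fixed_field n \<sigma>)"
    proof (intro allI impI)
      fix i assume "i < m"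
      obtain X Y0 where XY: "X \<in> \<rat>" "Y0 \<in> \<rat>" "Q i = Pt X (Y0 * s i)" using Qform by blast
      obtain y where y: "Y0 = of_rat y" using XY(2) Rats_cases by blast
      have sQ: "s i \<in> Qbar" using sqrt_alg ds unfolding Qbar_def by blast
      have Y0Q: "Y0 \<in> Qbar" using XY(2) by (rule Qbar_rat)
      have XF: "X \<in> fixed_field n \<sigma>" unfolding fixed_field_def
        using XY(1) Qbar_rat GQ_rat Gs by blast
      have "(Y0 * s i)^2 = of_rat (y^2 * d i)" using y ds by (simp add: power_mult_distrib of_rat_mult of_rat_power)
      hence YQ: "Y0 * s i \<in> Qbar" using sqrt_alg unfolding Qbar_def by blast
      have "\<sigma> k (Y0 * s i) = Y0 * s i" if k: "k < n" for k
      proof -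
        have G: "is_GQ (\<sigma> k)" using Gs k by simp
        have "\<sigma> k (Y0 * s i) = \<sigma> k Y0 * \<sigma> k (s i)" by (rule GQ_mult[OF G Y0Q sQ])
        thus ?thesis using GQ_rat[OF G XY(2)] ds k by simp
      qed
      hence YF: "Y0 * s i \<in> fixed_field n \<sigma>" unfolding fixed_field_def using YQ by blast
      show "Q i \<in> points_over a b (fixed_field n \<sigma>)"
        unfolding points_over_def using Qon[of i] XY(3) XF YF by simp
    qed
  next
    show "\<forall>c::nat \<Rightarrow> int. foldr (\<lambda>i R. ec_add a (ec_zmult a (c i) (Q i)) R) [0..<m] Infty = Infty
            \<longrightarrow> (\<forall>i<m. c i = 0)"
    proof (rule allI, rule impI)
    fix c :: "nat \<Rightarrow> int"
    assume h: "foldr (\<lambda>i R. ec_add a (ec_zmult a (c i) (Q i)) R) [0..<m] Infty = Infty"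
    have QKz: "\<And>i. inK (gen s {i}) (ec_zmult a (c i) (Q i))"
      using inK_zmult g_rat[OF ab(1)] QK by blast
    have "\<forall>i\<in>set [0..<m]. c i = 0"
      using indep_core[where a=a and Q=Q and s=s and c=c and xs="[0..<m]", OF ab(1) Qk Qy QKz nosq] h by simp
    thus "\<forall>i<m. c i = 0" by simp
  qed
  qed
  qed
qed

end
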